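(* Let $K$ be a field, $q\in K[x_1]\setminus K$, and let $f,g\in R_q[\tilde{\bm{x}}]\setminus R_q$ be such that $\operatorname{lm}(f)$ and $\operatorname{lm}(g)$ are relatively prime. Let $l_f:=\iota_q(\operatorname{lc}(f))$, $l_g:=\iota_q(\operatorname{lc}(g))$, $d:=\gcd(l_f,l_g)$, $f_1:=f-\operatorname{lt}(f)$, $g_1:=g-\operatorname{lt}(g)$. Then $$\sigma_q(d)\cdot S(f,g)=f_1\cdot\operatorname{lt}(g)-g_1\cdot\operatorname{lt}(f)=f_1g-g_1f.$$
   Context: $R_q:=\{r\in K[x_1]:\deg r<\deg q\}$ with operations modulo $q$ ($R_q\cong K[x_1]/(q)$); $R_q^\times$ its units. $\sigma_q:K[x_1]\to R_q$ is reduction modulo $q$ and $\iota_q:R_q\hookrightarrow K[x_1]$ the inclusion, both extended coefficientwise to polynomials in $\tilde{\bm{x}}=(x_2,\dots,x_n)$. A monomial ordering on monomials in $\tilde{\bm{x}}$ is fixed; for nonzero $f\in R_q[\tilde{\bm{x}}]$, $\operatorname{lm}(f)$, $\operatorname{lc}(f)$, $\operatorname{lt}(f)=\operatorname{lc}(f)\operatorname{lm}(f)$ are the leading monomial, coefficient and term. Gcds in $K[x_1]$ are monic and $\operatorname{lcm}(a,b)=ab/\gcd(a,b)$. For $f\in R_q[\tilde{\bm{x}}]\setminus R_q$ and $g\in R_q[\tilde{\bm{x}}]\setminus(R_q^\times\cup\{0\})$, with $m_f:=\sigma_q(\operatorname{lcm}(l_f,l_g)/l_f)$, $m_g:=\sigma_q(\operatorname{lcm}(l_f,l_g)/l_g)$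 and $\tilde{\bm{x}}^\gamma:=\operatorname{lcm}(\operatorname{lm}f,\operatorname{lm}g)$, the $S$-polynomial is $S(f,g):=\frac{m_f\tilde{\bm{x}}^\gamma}{\operatorname{lm}(f)}f-\frac{m_g\tilde{\bm{x}}^\gamma}{\operatorname{lm}(g)}g$. *)

theory Defs
  imports "HOL-Computational_Algebra.Polynomial_Factorial" "HOL-Library.Poly_Mapping"
begin

text \<open>Monomials in the variables x_2..x_n are exponent vectors of type 'v =>0 nat
  (the variable type 'v is finite). Polynomials in R_q[x~] are represented as
  finitely supported maps from monomials to K[x_1] whose coefficients all have
  degree < deg q (i.e. lie in R_q); ring operations are those of K[x_1][x~]
  followed by coefficientwise reduction modulo q.\<close>

definition monomial_order :: "(('v \<Rightarrow>\<^sub>0 nat) \<Rightarrow> ('v \<Rightarrow>\<^sub>0 nat) \<Rightarrow> bool) \<Rightarrow> bool" where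
  "monomial_order ord \<longleftrightarrow>
     (\<forall>a. ord a a) \<and>
     (\<forall>a b. ord a b \<and> ord b a \<longrightarrow> a = b) \<and>
     (\<forall>a b c. ord a b \<and> ord b c \<longrightarrow> ord a c) \<and>
     (\<forall>a b. ord a b \<or> ord b a) \<and>
     (\<forall>a. ord 0 a) \<and>
     (\<forall>a b c. ord a b \<longrightarrow> ord (a + c) (b + c))"

definition sigma_q :: "'a::field_gcd poly \<Rightarrow> ('m \<Rightarrow>\<^sub>0 'a poly) \<Rightarrow> ('m \<Rightarrow>\<^sub>0 'a poly)" where
  "sigma_q q f = Poly_Mapping.map (\<lambda>c. c mod q) f"

definition in_Rq_poly :: "'a::field_gcd poly \<Rightarrow> ('m \<Rightarrow>\<^sub>0 'a poly) \<Rightarrow> bool" where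
  "in_Rq_poly q f \<longleftrightarrow> (\<forall>m. degree (Poly_Mapping.lookup f m) < degree q)"

definition is_const :: "(('v \<Rightarrow>\<^sub>0 nat) \<Rightarrow>\<^sub>0 'a::zero) \<Rightarrow> bool" where
  "is_const f \<longleftrightarrow> Poly_Mapping.keys f \<subseteq> {0}"

definition const_q :: "'a::zero \<Rightarrow> (('v \<Rightarrow>\<^sub>0 nat) \<Rightarrow>\<^sub>0 'a)" where
  "const_q c = Poly_Mapping.single 0 c"

definition mult_q :: "'a::field_gcd poly \<Rightarrow> (('v \<Rightarrow>\<^sub>0 nat) \<Rightarrow>\<^sub>0 'a poly)
    \<Rightarrow> (('v \<Rightarrow>\<^sub>0 nat) \<Rightarrow>\<^sub>0 'a poly) \<Rightarrow> (('v \<Rightarrow>\<^sub>0 nat) \<Rightarrow>\<^sub>0 'a poly)" where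
  "mult_q q f g = sigma_q q (f * g)"

definition lm :: "(('v \<Rightarrow>\<^sub>0 nat) \<Rightarrow> ('v \<Rightarrow>\<^sub>0 nat) \<Rightarrow> bool) \<Rightarrow> (('v \<Rightarrow>\<^sub>0 nat) \<Rightarrow>\<^sub>0 'a::zero)
    \<Rightarrow> ('v \<Rightarrow>\<^sub>0 nat)" where
  "lm ord f = (THE m. m \<in> Poly_Mapping.keys f \<and> (\<forall>m'\<in>Poly_Mapping.keys f. ord m' m))"

definition lc :: "(('v \<Rightarrow>\<^sub>0 nat) \<Rightarrow> ('v \<Rightarrow>\<^sub>0 nat) \<Rightarrow> bool) \<Rightarrow> (('v \<Rightarrow>\<^sub>0 nat) \<Rightarrow>\<^sub>0 'a::zero) \<Rightarrow> 'a" where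
  "lc ord f = Poly_Mapping.lookup f (lm ord f)"

definition lt :: "(('v \<Rightarrow>\<^sub>0 nat) \<Rightarrow> ('v \<Rightarrow>\<^sub>0 nat) \<Rightarrow> bool) \<Rightarrow> (('v \<Rightarrow>\<^sub>0 nat) \<Rightarrow>\<^sub>0 'a::zero)
    \<Rightarrow> (('v \<Rightarrow>\<^sub>0 nat) \<Rightarrow>\<^sub>0 'a)" where
  "lt ord f = Poly_Mapping.single (lm ord f) (lc ord f)"

text \<open>lcm of monomials (pointwise max) and relative primality (gcd = 1)\<close>
definition mon_lcm :: "('v \<Rightarrow>\<^sub>0 nat) \<Rightarrow> ('v \<Rightarrow>\<^sub>0 nat) \<Rightarrow> ('v \<Rightarrow>\<^sub>0 nat)" where
  "mon_lcm a b = a + (b - a)"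

definition mon_coprime :: "('v \<Rightarrow>\<^sub>0 nat) \<Rightarrow> ('v \<Rightarrow>\<^sub>0 nat) \<Rightarrow> bool" where
  "mon_coprime a b \<longleftrightarrow> (\<forall>v. min (Poly_Mapping.lookup a v) (Poly_Mapping.lookup b v) = 0)"

text \<open>lcm in K[x_1] as in the paper: lcm(a,b) = ab / gcd(a,b), gcd monic (library gcd)\<close>
definition lcm_p :: "'a::field_gcd poly \<Rightarrow> 'a poly \<Rightarrow> 'a poly" where
  "lcm_p a b = (a * b) div gcd a b"

definition spoly_q :: "'a::field_gcd poly \<Rightarrow> (('v \<Rightarrow>\<^sub>0 nat) \<Rightarrow> ('v \<Rightarrow>\<^sub>0 nat) \<Rightarrow> bool)
    \<Rightarrow> (('v \<Rightarrow>\<^sub>0 nat) \<Rightarrow>\<^sub>0 'a poly) \<Rightarrow> (('v \<Rightarrow>\<^sub>0 nat) \<Rightarrow>\<^sub>0 'a poly) \<Rightarrow> (('v \<Rightarrow>\<^sub>0 nat) \<Rightarrow>\<^sub>0 'a poly)" where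
  "spoly_q q ord f g =
    (let lf = lc ord f; lg = lc ord g;
         mf = (lcm_p lf lg div lf) mod q; mg = (lcm_p lf lg div lg) mod q;
         \<gamma> = mon_lcm (lm ord f) (lm ord g)
     in mult_q q (Poly_Mapping.single (\<gamma> - lm ord f) mf) f
        - mult_q q (Poly_Mapping.single (\<gamma> - lm ord g) mg) g)"

end

theory Submission
  imports Defs
begin

lemma sigma_lookup: "Poly_Mapping.lookup (sigma_q q A) k = Poly_Mapping.lookup A k mod q"
  unfolding sigma_q_def by (simp add: Poly_Mapping.map.rep_eq when_def)

lemma sigma_add: "sigma_q q (A + B) = sigma_q q A + sigma_q q B"
  by (rule poly_mapping_eqI) (simp add: sigma_lookup lookup_add poly_mod_add_left)

lemma sigma_diff: "sigma_q q (A - B) = sigma_q q A - sigma_q q B"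
  by (rule poly_mapping_eqI) (simp add: sigma_lookup lookup_minus poly_mod_diff_left)

lemma sigma_qmult: "sigma_q q (Poly_Mapping.single 0 q * W) = 0"
proof (rule poly_mapping_eqI)
  fix k
  have "Poly_Mapping.single 0 q * W = Poly_Mapping.map ((*) q) W"
    by (simp add: mult_map_scale_conv_mult)
  then show "Poly_Mapping.lookup (sigma_q q (Poly_Mapping.single 0 q * W)) k = Poly_Mapping.lookup 0 k"
    by (simp add: sigma_lookup Poly_Mapping.map.rep_eq when_def)
qed

lemma sigma_split: "Y = sigma_q q Y + Poly_Mapping.single 0 q * Poly_Mapping.map (\<lambda>c. c div q) Y"
proof (rule poly_mapping_eqI)
  fix k
  have e: "Poly_Mapping.single 0 q * Poly_Mapping.map (\<lambda>c. c div q) Y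
      = Poly_Mapping.map ((*) q) (Poly_Mapping.map (\<lambda>c. c div q) Y)"
    by (simp add: mult_map_scale_conv_mult)
  define c where "c = Poly_Mapping.lookup Y k"
  have c: "c = c mod q + q * (c div q)"
    using div_mult_mod_eq[of c q] by (simp add: algebra_simps)
  have "Poly_Mapping.lookup (sigma_q q Y + Poly_Mapping.single 0 q * Poly_Mapping.map (\<lambda>c. c div q) Y) k
     = c mod q + q * (c div q)"
  proof (cases "c div q = 0")
    case True
    then have "c mod q = c" using c by simp
    then show ?thesis unfolding e using True c_def
      by (simp add: sigma_lookup lookup_add Poly_Mapping.map.rep_eq when_def)
  next
    case False
    then show ?thesis unfolding e using c_def
      by (simp add: sigma_lookup lookup_add Poly_Mapping.map.rep_eq when_def)
  qed
  then show "Poly_Mapping.lookup Y k = Poly_Mapping.lookup (sigma_q q Y + Poly_Mapping.single 0 q * Poly_Mapping.map (\<lambda>c. c div q) Y) k"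
    using c c_def by simp
qed

lemma sigma_mult_right:
  fixes X Y :: "('m::comm_monoid_add \<Rightarrow>\<^sub>0 'a::field_gcd poly)"
  shows "sigma_q q (X * sigma_q q Y) = sigma_q q (X * Y)"
proof -
  define Z where "Z = Poly_Mapping.map (\<lambda>c. c div q) Y"
  define s :: "'m \<Rightarrow>\<^sub>0 'a poly" where "s = Poly_Mapping.single 0 q"
  have "X * Y = X * (sigma_q q Y + s * Z)"
    using sigma_split[of Y q] unfolding Z_def[symmetric] s_def[symmetric]
    by (rule arg_cong[where f="(*) X"])
  also have "\<dots> = X * sigma_q q Y + s * (X * Z)"
    by (simp only: distrib_left mult.left_commute)
  finally have "X * Y = X * sigma_q q Y + s * (X * Z)" .
  then show ?thesis by (simp add: sigma_add sigma_qmult s_def)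
qed

lemma mo_facts:
  assumes "monomial_order ord"
  shows "ord a a" "ord a b \<Longrightarrow> ord b a \<Longrightarrow> a = b"
    "ord a b \<Longrightarrow> ord b c \<Longrightarrow> ord a c" "ord a b \<or> ord b a"
  using assms unfolding monomial_order_def by blast+

lemma lm_props:
  assumes mo: "monomial_order ord" and nz: "f \<noteq> 0"
  shows "lm ord f \<in> Poly_Mapping.keys f \<and> (\<forall>m'\<in>Poly_Mapping.keys f. ord m' (lm ord f))"
proof -
  note M = mo_facts[OF mo]
  have fin: "finite (Poly_Mapping.keys f)" by simp
  have ne: "Poly_Mapping.keys f \<noteq> {}" using nz by simp
  have ex: "\<exists>m\<in>S. \<forall>m'\<in>S. ord m' m" if "finite S" "S \<noteq> {}" for S
    using that
  proof (induction S rule: finite_ne_induct)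
    case (singleton x) then show ?case using M(1) by auto
  next
    case (insert x F)
    then obtain m where m: "m \<in> F" "\<forall>m'\<in>F. ord m' m" by auto
    show ?case
    proof (cases "ord x m")
      case True then show ?thesis using m by auto
    next
      case False
      then have xm: "ord m x" using M(4) by blast
      have "\<forall>m'\<in>insert x F. ord m' x"
      proof
        fix m' assume "m' \<in> insert x F"
        then show "ord m' x"
        proof
          assume "m' = x" then show ?thesis using M(1) by simp
        next
          assume "m' \<in> F" then have "ord m' m" using m by blast
          then show ?thesis using xm M(3) by blast
        qed
      qed
      then show ?thesis by blast
    qed
  qed
  obtain m where m: "m \<in> Poly_Mapping.keys f" "\<forall>m'\<in>Poly_Mapping.keys f. ord m' m"
    using ex[OF fin ne] by blast
  have "lm ord f = m"
    unfolding lm_def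
  proof (rule the_equality)
    show "m \<in> Poly_Mapping.keys f \<and> (\<forall>m'\<in>Poly_Mapping.keys f. ord m' m)" using m by blast
    fix m2 assume h: "m2 \<in> Poly_Mapping.keys f \<and> (\<forall>m'\<in>Poly_Mapping.keys f. ord m' m2)"
    then have "ord m m2" "ord m2 m" using m by blast+
    then show "m2 = m" using M(2) by blast
  qed
  then show ?thesis using m by simp
qed

lemma lc_props:
  assumes mo: "monomial_order ord" and R: "in_Rq_poly q f" and nc: "\<not> is_const f"
  shows "lc ord f \<noteq> 0" "degree (lc ord f) < degree q"
proof -
  have "f \<noteq> 0" using nc unfolding is_const_def by auto
  then show "lc ord f \<noteq> 0" using lm_props[OF mo \<open>f \<noteq> 0\<close>] unfolding lc_def by (simp add: in_keys_iff)
  show "degree (lc ord f) < degree q" using R unfolding in_Rq_poly_def lc_def by simp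
qed

lemma mon_coprime_lcm:
  assumes "mon_coprime a b"
  shows "mon_lcm a b - a = b" "mon_lcm a b - b = a"
proof -
  have "b - a = b"
  proof (rule poly_mapping_eqI)
    fix v show "Poly_Mapping.lookup (b - a) v = Poly_Mapping.lookup b v"
    proof -
      have "min (Poly_Mapping.lookup a v) (Poly_Mapping.lookup b v) = 0"
        using assms unfolding mon_coprime_def by blast
      then show ?thesis by (simp add: lookup_minus min_def split: if_splits)
    qed
  qed
  then show "mon_lcm a b - a = b" "mon_lcm a b - b = a"
    unfolding mon_lcm_def by simp_all
qed

theorem lemma5p5:
  fixes q :: "'a::field_gcd poly"
    and ord :: "('v::finite \<Rightarrow>\<^sub>0 nat) \<Rightarrow> ('v \<Rightarrow>\<^sub>0 nat) \<Rightarrow> bool"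
    and f g :: "('v \<Rightarrow>\<^sub>0 nat) \<Rightarrow>\<^sub>0 'a poly"
  assumes "monomial_order ord"
    and "degree q > 0"
    and "in_Rq_poly q f" and "\<not> is_const f"
    and "in_Rq_poly q g" and "\<not> is_const g"
    and "mon_coprime (lm ord f) (lm ord g)"
  defines "d \<equiv> gcd (lc ord f) (lc ord g)"
    and "f1 \<equiv> f - lt ord f"
    and "g1 \<equiv> g - lt ord g"
  shows "mult_q q (const_q (d mod q)) (spoly_q q ord f g)
           = mult_q q f1 (lt ord g) - mult_q q g1 (lt ord f)
       \<and> mult_q q f1 (lt ord g) - mult_q q g1 (lt ord f)
           = mult_q q f1 g - mult_q q g1 f"
proof -
  define lf where "lf = lc ord f"
  define lg where "lg = lc ord g"
  have lf0: "lf \<noteq> 0" and dlf: "degree lf < degree q"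
    using lc_props[OF assms(1,3,4)] lf_def by auto
  have lg0: "lg \<noteq> 0" and dlg: "degree lg < degree q"
    using lc_props[OF assms(1,5,6)] lg_def by auto
  have dd: "d = gcd lf lg" using d_def lf_def lg_def by simp
  have "d dvd lf" "d dvd lg" using dd by auto
  have d0: "d \<noteq> 0" using dd lf0 by simp
  have "degree d \<le> degree lf" using \<open>d dvd lf\<close> lf0 by (simp add: dvd_imp_degree_le)
  then have dmod: "d mod q = d" using dlf by (simp add: mod_poly_less)
  have lcm1: "lcm_p lf lg div lf = lg div d"
    unfolding lcm_p_def dd[symmetric] using lf0 \<open>d dvd lg\<close>
  proof -
    have "lf * lg div d = lf * (lg div d)" using \<open>d dvd lg\<close> by (rule div_mult_swap[symmetric])
    then show "lf * lg div d div lf = lg div d" using lf0 by simp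
  qed
  have lcm2: "lcm_p lf lg div lg = lf div d"
    unfolding lcm_p_def dd[symmetric] using lg0 \<open>d dvd lf\<close>
  proof -
    have "lf * lg div d = lg * (lf div d)" using \<open>d dvd lf\<close> by (metis div_mult_swap mult.commute)
    then show "lf * lg div d div lg = lf div d" using lg0 by simp
  qed
  have "lg div d dvd lg" using \<open>d dvd lg\<close> by (metis dvd_div_mult_self dvd_triv_left)
  then have "degree (lg div d) \<le> degree lg" using lg0 by (rule dvd_imp_degree_le)
  then have mf: "(lcm_p lf lg div lf) mod q = lg div d" using lcm1 dlg by (simp add: mod_poly_less)
  have "lf div d dvd lf" using \<open>d dvd lf\<close> by (metis dvd_div_mult_self dvd_triv_left)
  then have "degree (lf div d) \<le> degree lf" using lf0 by (rule dvd_imp_degree_le)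
  then have mg: "(lcm_p lf lg div lg) mod q = lf div d" using lcm2 dlf by (simp add: mod_poly_less)
  define a where "a = lm ord f"
  define b where "b = lm ord g"
  have g1: "mon_lcm a b - a = b" and g2: "mon_lcm a b - b = a"
    using mon_coprime_lcm[OF assms(7)] a_def b_def by auto
  have S: "spoly_q q ord f g = sigma_q q (Poly_Mapping.single b (lg div d) * f)
      - sigma_q q (Poly_Mapping.single a (lf div d) * g)"
    unfolding spoly_q_def Let_def mult_q_def lf_def[symmetric] lg_def[symmetric]
      a_def[symmetric] b_def[symmetric] mf mg g1 g2 by simp
  have e1: "Poly_Mapping.single 0 d * Poly_Mapping.single b (lg div d) = lt ord g"
    unfolding lt_def mult_single b_def lg_def using \<open>d dvd lg\<close> lg_def by simp
  have e2: "Poly_Mapping.single 0 d * Poly_Mapping.single a (lf div d) = lt ord f"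
    unfolding lt_def mult_single a_def lf_def using \<open>d dvd lf\<close> lf_def by simp
  have "mult_q q (const_q (d mod q)) (spoly_q q ord f g)
      = sigma_q q (Poly_Mapping.single 0 d * (Poly_Mapping.single b (lg div d) * f
          - Poly_Mapping.single a (lf div d) * g))"
    unfolding mult_q_def const_q_def dmod S sigma_diff[symmetric] sigma_mult_right ..
  also have "\<dots> = sigma_q q (lt ord g * f - lt ord f * g)"
    by (simp add: right_diff_distrib mult.assoc[symmetric] e1 e2)
  also have "lt ord g * f - lt ord f * g = f1 * lt ord g - g1 * lt ord f"
    unfolding f1_def g1_def by (simp add: algebra_simps)
  finally have A: "mult_q q (const_q (d mod q)) (spoly_q q ord f g)
      = mult_q q f1 (lt ord g) - mult_q q g1 (lt ord f)"
    unfolding mult_q_def sigma_diff .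
  have "f1 * g - g1 * f = f1 * lt ord g - g1 * lt ord f"
    unfolding f1_def g1_def by (simp add: algebra_simps)
  then have B: "mult_q q f1 (lt ord g) - mult_q q g1 (lt ord f) = mult_q q f1 g - mult_q q g1 f"
    unfolding mult_q_def sigma_diff[symmetric] by simp
  show ?thesis using A B by simp
qed

end
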